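(* Let pieces have length $a=2$ and let $m\geq 1$. There is a bijective correspondence between positive $(2m,m)$-strings and right $0$-pyramids of size $m$.
   Context: A string is a finite sequence of $0$'s and $1$'s; an $(n,m)$-string is a string of length $n$ containing exactly $m$ $1$'s. A $(2m,m)$-string $x_1x_2\dots x_{2m}$ is positive if $t_s=\sum_{u=1}^s(2x_u-1)\geq 0$ for all $s=1,\dots,2m$. A piece is an open interval $]s,s+2[$ with $s\in\mathbb Z$; two pieces are concurrent iff their intervals intersect. A heap is a finite configuration obtained by successively dropping pieces vertically towards the horizontal axis, each coming to rest on the axis or on the highest previously placed piece whose interval meets its own (configurations, not dropping orders, are counted). A pyramid is a heap with a unique bottom piece (exactly one piece on the axis); its size is its number of pieces. A right $0$-pyramid is a pyramid whose bottom piece covers $]0,2[$ and is a leftmost piece (no piece covers $]t,t+2[$ with $t<0$). *)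

theory Defs
  imports Main
begin

(* A string x_1...x_n is a bool list; True encodes 1, False encodes 0. *)

definition nm_string :: "nat \<Rightarrow> nat \<Rightarrow> bool list \<Rightarrow> bool" where
  "nm_string n m xs \<longleftrightarrow> length xs = n \<and> length (filter id xs) = m"

definition walk :: "bool list \<Rightarrow> nat \<Rightarrow> int" where
  "walk xs s = (\<Sum>u<s. if xs ! u then 1 else -1)"

definition positive_string :: "nat \<Rightarrow> bool list \<Rightarrow> bool" where
  "positive_string m xs \<longleftrightarrow> nm_string (2*m) m xs \<and> (\<forall>s\<in>{1..2*m}. walk xs s \<ge> 0)"

(* A placed piece (s, h): the piece ]s, s+2[ resting at level h (h = 0: on the axis). *)
type_synonym piece = "int \<times> nat"

(* pieces ]s,s+2[ and ]t,t+2[ are concurrent iff the open intervals meet *)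
definition concurrent :: "int \<Rightarrow> int \<Rightarrow> bool" where
  "concurrent s t \<longleftrightarrow> \<bar>s - t\<bar> < 2"

definition drop_level :: "piece set \<Rightarrow> int \<Rightarrow> nat" where
  "drop_level H s =
     (if \<exists>(t,h)\<in>H. concurrent s t
      then Suc (Max {h. \<exists>t. (t,h) \<in> H \<and> concurrent s t})
      else 0)"

inductive heap :: "piece set \<Rightarrow> bool" where
  heap_empty: "heap {}"
| heap_drop: "heap H \<Longrightarrow> heap (insert (s, drop_level H s) H)"

definition pyramid :: "piece set \<Rightarrow> bool" where
  "pyramid H \<longleftrightarrow> heap H \<and> card {p \<in> H. snd p = 0} = 1"

definition right_0_pyramid :: "piece set \<Rightarrow> bool" where
  "right_0_pyramid H \<longleftrightarrow> pyramid H \<and> (0, 0) \<in> H \<and> (\<forall>(t,h)\<in>H. t \<ge> 0)"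

end

theory Submission
  imports Defs
begin


definition ht :: "bool list \<Rightarrow> int" where
  "ht xs = sum_list (map (\<lambda>b. if b then 1 else -1) xs)"

lemma ht_simps[simp]: "ht [] = 0" "ht (b#xs) = (if b then 1 else -1) + ht xs"
  "ht (xs@ys) = ht xs + ht ys"
  by (auto simp: ht_def)

lemma ht_rep[simp]: "ht (replicate n False) = - int n"
  by (induction n) auto

lemma ht_count: "ht xs = 2 * int (length (filter id xs)) - int (length xs)"
  by (induction xs) auto

lemma walk_ht: "s \<le> length xs \<Longrightarrow> walk xs s = ht (take s xs)"
proof (induction s)
  case 0 then show ?case by (simp add: walk_def)
next
  case (Suc s)
  have "walk xs (Suc s) = walk xs s + (if xs!s then 1 else -1)" by (simp add: walk_def)
  moreover have "take (Suc s) xs = take s xs @ [xs!s]" using Suc.prems by (simp add: take_Suc_conv_app_nth)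
  ultimately show ?case using Suc by simp
qed

definition PN :: "bool list \<Rightarrow> bool" where
  "PN xs \<longleftrightarrow> (\<forall>k\<le>length xs. 0 \<le> ht (take k xs))"

lemma PN_app: "PN (xs@ys) \<longleftrightarrow> PN xs \<and> (\<forall>k\<le>length ys. 0 \<le> ht xs + ht (take k ys))"
proof
  assume A: "PN (xs@ys)"
  have "PN xs" unfolding PN_def
  proof (intro allI impI)
    fix k assume "k \<le> length xs"
    then have "take k (xs@ys) = take k xs" by simp
    then show "0 \<le> ht (take k xs)" using A \<open>k \<le> length xs\<close> unfolding PN_def by (metis le_add1 length_append order_trans)
  qed
  moreover have "\<forall>k\<le>length ys. 0 \<le> ht xs + ht (take k ys)"
  proof (intro allI impI)
    fix k assume "k \<le> length ys"
    have "take (length xs + k) (xs@ys) = xs @ take k ys" by simp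
    then show "0 \<le> ht xs + ht (take k ys)" using A \<open>k \<le> length ys\<close> unfolding PN_def
      by (metis add_le_cancel_left ht_simps(3) length_append)
  qed
  ultimately show "PN xs \<and> (\<forall>k\<le>length ys. 0 \<le> ht xs + ht (take k ys))" by blast
next
  assume A: "PN xs \<and> (\<forall>k\<le>length ys. 0 \<le> ht xs + ht (take k ys))"
  show "PN (xs@ys)" unfolding PN_def
  proof (intro allI impI)
    fix k assume k: "k \<le> length (xs@ys)"
    show "0 \<le> ht (take k (xs@ys))"
    proof (cases "k \<le> length xs")
      case True then show ?thesis using A unfolding PN_def by simp
    next
      case False
      then have "take k (xs@ys) = xs @ take (k - length xs) ys" by simp
      moreover have "k - length xs \<le> length ys" using k by simp
      ultimately show ?thesis using A by simp
    qed
  qed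
qed

lemma PN_nonneg: "PN p \<Longrightarrow> 0 \<le> ht p"
  unfolding PN_def by (metis order_refl take_all)

lemma take_rep: "take k (replicate n x) = replicate (min k n) x"
  by (simp add: take_replicate)

lemma PN_step: "PN p \<Longrightarrow> int n \<le> ht p + 1 \<Longrightarrow> PN (p @ True # replicate n False)"
  unfolding PN_app
proof (intro conjI allI impI)
  fix k assume P: "PN p" and n: "int n \<le> ht p + 1" and k: "k \<le> length (True # replicate n False)"
  show "0 \<le> ht p + ht (take k (True # replicate n False))"
  proof (cases k)
    case 0 then show ?thesis using PN_nonneg[OF P] by simp
  next
    case (Suc i)
    then show ?thesis using n by (simp add: take_rep)
  qed
qed

lemma PN_down: "PN p \<Longrightarrow> int n \<le> ht p \<Longrightarrow> PN (p @ replicate n False)"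
  unfolding PN_app by (auto simp: take_rep)

lemma positive_iff: "positive_string m xs \<longleftrightarrow> length xs = 2*m \<and> PN xs \<and> ht xs = 0"
proof
  assume A: "positive_string m xs"
  then have L: "length xs = 2*m" and F: "length (filter id xs) = m"
    by (auto simp: positive_string_def nm_string_def)
  have "ht xs = 0" using ht_count[of xs] L F by simp
  moreover have "PN xs" unfolding PN_def
  proof (intro allI impI)
    fix k assume k: "k \<le> length xs"
    show "0 \<le> ht (take k xs)"
    proof (cases "k = 0")
      case True then show ?thesis by simp
    next
      case False
      then have "k \<in> {1..2*m}" using k L by auto
      then have "walk xs k \<ge> 0" using A by (simp add: positive_string_def)
      then show ?thesis using walk_ht[OF k] by simp
    qed
  qed
  ultimately show "length xs = 2*m \<and> PN xs \<and> ht xs = 0" using L by blast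
next
  assume A: "length xs = 2*m \<and> PN xs \<and> ht xs = 0"
  then have "length (filter id xs) = m" using ht_count[of xs] by simp
  moreover have "\<forall>s\<in>{1..2*m}. walk xs s \<ge> 0"
  proof
    fix s assume s: "s \<in> {1..2*m}"
    then have sl: "s \<le> length xs" using A by simp
    have "0 \<le> ht (take s xs)" using A sl unfolding PN_def by blast
    then show "walk xs s \<ge> 0" using walk_ht[OF sl] by simp
  qed
  ultimately show "positive_string m xs" unfolding positive_string_def nm_string_def using A by blast
qed

lemma last_true: "True \<in> set xs \<Longrightarrow> \<exists>pre n. xs = pre @ True # replicate n False"
proof (induction xs rule: rev_induct)
  case Nil then show ?case by simp
next
  case (snoc x xs)
  show ?case
  proof (cases x)
    case True then show ?thesis by (intro exI[of _ xs] exI[of _ 0]) simp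
  next
    case False
    then have "True \<in> set xs" using snoc.prems by simp
    then obtain pre n where "xs = pre @ True # replicate n False" using snoc.IH by blast
    then show ?thesis using False by (intro exI[of _ pre] exI[of _ "Suc n"]) (simp add: replicate_append_same)
  qed
qed

lemma decomp_rev: "replicate a False @ True # p = replicate c False @ True # q \<Longrightarrow> a = c \<and> p = q"
proof (induction a arbitrary: c)
  case 0 then show ?case by (cases c) auto
next
  case (Suc a) then show ?case by (cases c) auto
qed

lemma decomp_unique: "p @ True # replicate a False = q @ True # replicate c False \<Longrightarrow> a = c \<and> p = q"
proof -
  assume "p @ True # replicate a False = q @ True # replicate c False"
  then have "rev (p @ True # replicate a False) = rev (q @ True # replicate c False)" by simp
  then have "replicate a False @ True # rev p = replicate c False @ True # rev q" by simp
  then have "a = c \<and> rev p = rev q" by (rule decomp_rev)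
  then show ?thesis by simp
qed

fun valid :: "nat list \<Rightarrow> bool" where
  "valid [] = False"
| "valid [x] = (x = 0)"
| "valid (x#y#r) = (x \<le> Suc y \<and> valid (y#r))"

fun W :: "nat list \<Rightarrow> bool list" where
  "W [] = []"
| "W (x#r) = take (length (W r) - x) (W r) @ True # replicate (Suc x) False"

lemma W_inv: "valid (x#r) \<Longrightarrow> ht (take (length (W r) - x) (W r)) = int x
   \<and> PN (take (length (W r) - x) (W r)) \<and> length (W (x#r)) = 2*length (x#r)
   \<and> (r \<noteq> [] \<longrightarrow> W r = take (length (W r) - x) (W r) @ replicate x False)"
proof (induction r arbitrary: x)
  case Nil then show ?case by (simp add: PN_def)
next
  case (Cons y r')
  have xy: "x \<le> Suc y" and v: "valid (y#r')" using Cons.prems by auto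
  define T where "T = take (length (W r') - y) (W r')"
  have IH: "ht T = int y" "PN T" "length (W (y#r')) = 2*length (y#r')"
    using Cons.IH[OF v] unfolding T_def by auto
  have Wy: "W (y#r') = T @ True # replicate (Suc y) False" by (simp add: T_def)
  define T2 where "T2 = T @ True # replicate (Suc y - x) False"
  have rep: "replicate (Suc y) False = replicate (Suc y - x) False @ replicate x False"
    using xy by (simp add: replicate_add[symmetric])
  have Wy2: "W (y#r') = T2 @ replicate x False" using Wy rep by (simp add: T2_def)
  have tk: "take (length (W (y#r')) - x) (W (y#r')) = T2" using Wy2 by simp
  have c1: "ht T2 = int x" using IH xy by (simp add: T2_def)
  have c2: "PN T2" unfolding T2_def using PN_step[OF IH(2)] IH(1) xy by simp
  have c3: "length (W (x#y#r')) = 2*length (x#y#r')"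
  proof -
    have W3: "W (x#y#r') = T2 @ True # replicate (Suc x) False"
      by (simp only: W.simps(2)[of x "y#r'"] tk)
    have "length (W (y#r')) = length T2 + x" using Wy2 by (simp only: length_append length_replicate)
    then have "length T2 + x = 2*length (y#r')" using IH(3) by linarith
    moreover have "length (W (x#y#r')) = length T2 + Suc (Suc x)" unfolding W3 by (simp del: W.simps)
    ultimately show ?thesis by (simp del: W.simps)
  qed
  have conj: "ht T2 = int x \<and> PN T2 \<and> length (W (x#y#r')) = 2*length (x#y#r')
     \<and> (y#r' \<noteq> [] \<longrightarrow> W (y#r') = T2 @ replicate x False)"
    by (rule conjI[OF c1 conjI[OF c2 conjI[OF c3 impI[OF Wy2]]]])
  show ?case unfolding tk by (rule conj)
qed

lemma W_D: "valid (x#r) \<Longrightarrow> PN (W (x#r)) \<and> ht (W (x#r)) = 0"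
proof -
  assume v: "valid (x#r)"
  from W_inv[OF v] have a: "ht (take (length (W r) - x) (W r)) = int x"
    and b: "PN (take (length (W r) - x) (W r))" by auto
  have "PN (take (length (W r) - x) (W r) @ True # replicate (Suc x) False)"
    by (rule PN_step[OF b]) (simp add: a)
  then show ?thesis using a by (simp del: replicate_Suc)
qed

lemma valid_tl: "valid (x#r) \<Longrightarrow> r \<noteq> [] \<Longrightarrow> valid r"
  by (cases r) auto

lemma W_inj: "valid b \<Longrightarrow> valid b' \<Longrightarrow> W b = W b' \<Longrightarrow> b = b'"
proof (induction b arbitrary: b')
  case Nil then show ?case by simp
next
  case (Cons x r)
  obtain x' r' where b': "b' = x'#r'" using Cons.prems by (cases b') auto
  have E: "take (length (W r) - x) (W r) @ True # replicate (Suc x) False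
         = take (length (W r') - x') (W r') @ True # replicate (Suc x') False"
    using Cons.prems b' by simp
  from decomp_unique[OF E] have xx: "x = x'"
    and TT: "take (length (W r) - x) (W r) = take (length (W r') - x') (W r')" by auto
  have "length (W (x#r)) = length (W (x'#r'))" using Cons.prems b' by simp
  then have len: "length r = length r'"
    using W_inv[OF Cons.prems(1), THEN conjunct2, THEN conjunct2, THEN conjunct1]
      W_inv[of x' r', THEN conjunct2, THEN conjunct2, THEN conjunct1] Cons.prems b' by simp
  show ?case
  proof (cases "r = []")
    case True then show ?thesis using len xx b' by simp
  next
    case False
    then have F': "r' \<noteq> []" using len by auto
    have e1: "W r = take (length (W r) - x) (W r) @ replicate x False"
      using W_inv[OF Cons.prems(1)] False by blast
    have e2: "W r' = take (length (W r') - x') (W r') @ replicate x' False"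
      using W_inv[of x' r'] Cons.prems(2) b' F' by blast
    have "W r = take (length (W r) - x) (W r) @ replicate x False" by (rule e1)
    also have "\<dots> = take (length (W r') - x') (W r') @ replicate x' False" by (subst TT) (simp only: xx)
    also have "\<dots> = W r'" by (rule e2[symmetric])
    finally have WW: "W r = W r'" .
    have vr: "valid r" using valid_tl Cons.prems(1) False by blast
    have vr': "valid r'" using valid_tl Cons.prems(2) b' F' by blast
    have "r = r'" by (rule Cons.IH[OF vr vr' WW])
    then show ?thesis using xx b' by simp
  qed
qed

lemma W_surj: "m \<ge> 1 \<Longrightarrow> length xs = 2*m \<Longrightarrow> PN xs \<Longrightarrow> ht xs = 0 \<Longrightarrow>
   \<exists>b. valid b \<and> length b = m \<and> W b = xs"
proof (induction m arbitrary: xs)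
  case 0 then show ?case by simp
next
  case (Suc m)
  have "True \<in> set xs"
  proof (rule ccontr)
    assume "True \<notin> set xs"
    then have "filter id xs = []" by (auto simp: filter_empty_conv)
    then show False using ht_count[of xs] Suc.prems by simp
  qed
  then obtain pre n where xs: "xs = pre @ True # replicate n False" using last_true by blast
  have Ppre: "PN pre" using Suc.prems(3) xs PN_app by blast
  have hp: "0 \<le> ht pre" using PN_nonneg[OF Ppre] .
  have hn: "ht pre + 1 = int n" using Suc.prems(4) xs by simp
  define x where "x = nat (ht pre)"
  have hx: "ht pre = int x" using hp x_def by simp
  have nx: "n = Suc x" using hn hx by simp
  show ?case
  proof (cases "m = 0")
    case True
    then have "length pre = 0" using Suc.prems(2) xs nx by simp
    then have "pre = []" by simp
    then have "x = 0" using hx by simp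
    then show ?thesis using \<open>pre = []\<close> xs nx True by (intro exI[of _ "[0]"]) simp
  next
    case False
    define xs' where "xs' = pre @ replicate x False"
    have l': "length xs' = 2*m" using Suc.prems(2) xs nx xs'_def by simp
    have p': "PN xs'" unfolding xs'_def using PN_down[OF Ppre] hx by simp
    have h': "ht xs' = 0" using hx xs'_def by simp
    obtain b where b: "valid b" "length b = m" "W b = xs'"
      using Suc.IH[OF _ l' p' h'] False by auto
    obtain y r where br: "b = y#r" using b False by (cases b) auto
    define T where "T = take (length (W r) - y) (W r)"
    have E: "pre @ replicate x False = T @ True # replicate (Suc y) False"
      using b(3) br xs'_def T_def by simp
    have xy: "x \<le> Suc y"
    proof (rule ccontr)
      assume "\<not> x \<le> Suc y"
      have "rev (pre @ replicate x False) = rev (T @ True # replicate (Suc y) False)" using E by simp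
      then have E2: "replicate x False @ rev pre = replicate (Suc y) False @ True # rev T"
        by (simp add: replicate_append_same)
      have "(replicate x False @ rev pre) ! Suc y = False" using \<open>\<not> x \<le> Suc y\<close> by (simp add: nth_append)
      moreover have "(replicate (Suc y) False @ True # rev T) ! Suc y = True" by (simp add: nth_append)
      ultimately show False using E2 by simp
    qed
    have v: "valid (x#b)" using b br xy by simp
    have "W (x#b) = xs"
    proof -
      have "take (length (W b) - x) (W b) = pre" using b(3) xs'_def by simp
      then show ?thesis using xs nx by simp
    qed
    then show ?thesis using v b by (intro exI[of _ "x#b"]) simp
  qed
qed



lemma conc_sym: "concurrent s t = concurrent t s"
  by (auto simp: concurrent_def)

lemma conc_refl[simp]: "concurrent s s"
  by (simp add: concurrent_def)

definition maxl :: "piece set \<Rightarrow> piece \<Rightarrow> bool" where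
  "maxl H p \<longleftrightarrow> p \<in> H \<and> (\<forall>q\<in>H. concurrent (fst p) (fst q) \<longrightarrow> snd q \<le> snd p)"

definition lm :: "piece set \<Rightarrow> int" where
  "lm H = Min (fst ` {p. maxl H p})"

fun P :: "nat list \<Rightarrow> piece set" where
  "P [] = {}"
| "P (x#r) = insert (int x, drop_level (P r) (int x)) (P r)"

lemma finite_P[simp]: "finite (P b)"
  by (induction b) auto

definition levels :: "piece set \<Rightarrow> int \<Rightarrow> nat set" where
  "levels H s = {h. \<exists>t. (t,h) \<in> H \<and> concurrent s t}"

lemma finite_levels: "finite H \<Longrightarrow> finite (levels H s)"
proof -
  assume "finite H"
  moreover have "levels H s \<subseteq> snd ` H" unfolding levels_def by force
  ultimately show ?thesis using finite_subset by blast
qed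

lemma drop_level_alt: "drop_level H s = (if levels H s \<noteq> {} then Suc (Max (levels H s)) else 0)"
  unfolding drop_level_def levels_def by auto

lemma DL_gt: "finite H \<Longrightarrow> (t,h) \<in> H \<Longrightarrow> concurrent s t \<Longrightarrow> h < drop_level H s"
proof -
  assume f: "finite H" and th: "(t,h) \<in> H" and c: "concurrent s t"
  have hl: "h \<in> levels H s" using th c unfolding levels_def by blast
  then have "h \<le> Max (levels H s)" using finite_levels[OF f] by simp
  moreover have "levels H s \<noteq> {}" using hl by blast
  ultimately show ?thesis by (simp add: drop_level_alt)
qed

lemma DL_pos: "finite H \<Longrightarrow> 0 < drop_level H s \<Longrightarrow> \<exists>t. (t, drop_level H s - 1) \<in> H \<and> concurrent s t"
proof -
  assume f: "finite H" and p: "0 < drop_level H s"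
  then have ne: "levels H s \<noteq> {}" by (auto simp: drop_level_alt split: if_splits)
  then have M: "Max (levels H s) \<in> levels H s" using finite_levels[OF f] by simp
  have "drop_level H s - 1 = Max (levels H s)" using ne by (simp add: drop_level_alt)
  then show ?thesis using M unfolding levels_def by simp
qed

lemma DL_eq: "finite H \<Longrightarrow> 0 < l \<Longrightarrow> (t0, l-1) \<in> H \<Longrightarrow> concurrent s t0 \<Longrightarrow>
   (\<forall>t h. (t,h) \<in> H \<longrightarrow> concurrent s t \<longrightarrow> h < l) \<Longrightarrow> drop_level H s = l"
proof -
  assume f: "finite H" and l: "0 < l" and t0: "(t0, l-1) \<in> H" "concurrent s t0"
    and A: "\<forall>t h. (t,h) \<in> H \<longrightarrow> concurrent s t \<longrightarrow> h < l"
  have m: "l - 1 \<in> levels H s" using t0 unfolding levels_def by blast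
  have "\<forall>h\<in>levels H s. h \<le> l - 1" using A unfolding levels_def by force
  then have "Max (levels H s) = l - 1" using m finite_levels[OF f] by (intro Max_eqI) auto
  then show ?thesis using m l by (auto simp: drop_level_alt)
qed

definition good :: "piece set \<Rightarrow> bool" where
  "good H \<longleftrightarrow> finite H \<and> (\<forall>s h. (s,h) \<in> H \<longrightarrow> 0 < h \<longrightarrow> (\<exists>t. (t,h-1) \<in> H \<and> concurrent s t))
     \<and> (\<forall>s t h. (s,h) \<in> H \<longrightarrow> (t,h) \<in> H \<longrightarrow> s \<noteq> t \<longrightarrow> \<not> concurrent s t)"

lemma heap_good: "heap H \<Longrightarrow> good H"
proof (induction rule: heap.induct)
  case heap_empty then show ?case by (simp add: good_def)
next
  case (heap_drop H s)
  let ?L = "drop_level H s"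
  have f: "finite H" using heap_drop.IH by (simp add: good_def)
  have sup: "\<forall>u h. (u,h) \<in> insert (s,?L) H \<longrightarrow> 0 < h \<longrightarrow> (\<exists>t. (t,h-1) \<in> insert (s,?L) H \<and> concurrent u t)"
  proof (intro allI impI)
    fix u h assume uh: "(u,h) \<in> insert (s,?L) H" and h: "0 < h"
    show "\<exists>t. (t,h-1) \<in> insert (s,?L) H \<and> concurrent u t"
    proof (cases "(u,h) = (s,?L)")
      case True
      then show ?thesis using DL_pos[OF f, of s] h by auto
    next
      case False
      then have "(u,h) \<in> H" using uh by blast
      then show ?thesis using heap_drop.IH h unfolding good_def by blast
    qed
  qed
  have anti: "\<forall>u t h. (u,h) \<in> insert (s,?L) H \<longrightarrow> (t,h) \<in> insert (s,?L) H \<longrightarrow> u \<noteq> t \<longrightarrow> \<not> concurrent u t"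
  proof (intro allI impI)
    fix u t h assume a: "(u,h) \<in> insert (s,?L) H" "(t,h) \<in> insert (s,?L) H" "u \<noteq> t"
    show "\<not> concurrent u t"
    proof (cases "(u,h) = (s,?L)")
      case True
      then show ?thesis
      proof (cases "(t,h) = (s,?L)")
        case True then show ?thesis using \<open>(u,h) = (s,?L)\<close> a(3) by simp
      next
        case False
        then have "(t,h) \<in> H" using a by blast
        then show ?thesis using DL_gt[OF f, of t h s] True by auto
      qed
    next
      case False
      then have uH: "(u,h) \<in> H" using a by blast
      show ?thesis
      proof (cases "(t,h) = (s,?L)")
        case True then show ?thesis using DL_gt[OF f uH, of s] conc_sym by auto
      next
        case False
        then have "(t,h) \<in> H" using a by blast
        then show ?thesis using uH a(3) heap_drop.IH unfolding good_def by blast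
      qed
    qed
  qed
  show ?case using f sup anti unfolding good_def by simp
qed

lemma descent: "good H \<Longrightarrow> (s,h) \<in> H \<Longrightarrow> h' \<le> h \<Longrightarrow> \<exists>t. (t,h') \<in> H"
proof (induction h arbitrary: s)
  case 0 then show ?case by auto
next
  case (Suc h)
  show ?case
  proof (cases "h' = Suc h")
    case True then show ?thesis using Suc.prems by blast
  next
    case False
    obtain t where "(t,h) \<in> H" using Suc.prems unfolding good_def by fastforce
    then show ?thesis using Suc.IH[OF Suc.prems(1)] Suc.prems(3) False by simp
  qed
qed

lemma ex_maxl: "finite H \<Longrightarrow> H \<noteq> {} \<Longrightarrow> \<exists>p. maxl H p"
proof -
  assume f: "finite H" and ne: "H \<noteq> {}"
  then have "Max (snd ` H) \<in> snd ` H" by simp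
  then obtain p where p: "p \<in> H" "snd p = Max (snd ` H)" by auto
  have "\<forall>q\<in>H. snd q \<le> snd p" using p(2) f by simp
  then show ?thesis using p(1) unfolding maxl_def by blast
qed

lemma finite_maxl: "finite H \<Longrightarrow> finite (fst ` {p. maxl H p})"
proof -
  assume "finite H"
  moreover have "{p. maxl H p} \<subseteq> H" unfolding maxl_def by blast
  ultimately show ?thesis using finite_subset by blast
qed

lemma lm_le: "finite H \<Longrightarrow> maxl H p \<Longrightarrow> lm H \<le> fst p"
  unfolding lm_def by (rule Min_le[OF finite_maxl]) auto

lemma lm_mem: "finite H \<Longrightarrow> H \<noteq> {} \<Longrightarrow> \<exists>p. maxl H p \<and> fst p = lm H"
proof -
  assume f: "finite H" and ne: "H \<noteq> {}"
  then obtain p where "maxl H p" using ex_maxl by blast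
  then have "fst ` {p. maxl H p} \<noteq> {}" by blast
  then have "lm H \<in> fst ` {p. maxl H p}" unfolding lm_def using finite_maxl[OF f] by (rule Min_in[rotated])
  then show ?thesis by auto
qed

lemma lm_eqI: "finite H \<Longrightarrow> maxl H p \<Longrightarrow> (\<forall>q. maxl H q \<longrightarrow> fst p \<le> fst q) \<Longrightarrow> lm H = fst p"
  unfolding lm_def using finite_maxl by (intro Min_eqI) auto



lemma valid_range: "valid (x#r) \<Longrightarrow> z \<le> x \<Longrightarrow> z \<in> set (x#r)"
proof (induction r arbitrary: x)
  case Nil then show ?case by simp
next
  case (Cons y r')
  show ?case
  proof (cases "z = x")
    case True then show ?thesis by simp
  next
    case False
    then have "z \<le> y" using Cons.prems by simp
    then have "z \<in> set (y#r')" using Cons.IH Cons.prems by simp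
    then show ?thesis by simp
  qed
qed

lemma filt_ins: "snd a \<noteq> 0 \<Longrightarrow> {p \<in> insert a A. snd p = (0::nat)} = {p \<in> A. snd p = 0}"
  by auto

lemma filt_diff: "snd a \<noteq> 0 \<Longrightarrow> {p \<in> A - {a}. snd p = (0::nat)} = {p \<in> A. snd p = 0}"
  by auto

lemma P_fst: "fst ` P b = int ` set b"
  by (induction b) auto

lemma DL_empty: "drop_level {} s = 0"
  by (simp add: drop_level_def)

lemma P_single: "P [0] = {(0,0)}"
  by (simp add: DL_empty)

lemma P_props: "valid (x#r) \<Longrightarrow> heap (P (x#r)) \<and> card (P (x#r)) = length (x#r)
   \<and> {p \<in> P (x#r). snd p = 0} = {(0,0)} \<and> (\<forall>p\<in>P (x#r). 0 \<le> fst p) \<and> lm (P (x#r)) = int x"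
proof (induction r arbitrary: x)
  case Nil
  then have x: "x = 0" by simp
  have h: "heap (P [0])" using heap_drop[OF heap_empty, of 0] by simp
  have m: "maxl {(0,0)} (0,0)" by (simp add: maxl_def)
  have "lm {(0,0)} = 0" using lm_eqI[OF _ m] by (simp add: maxl_def)
  then show ?case using x h P_single by auto
next
  case (Cons y r')
  have xy: "x \<le> Suc y" and v: "valid (y#r')" using Cons.prems by auto
  define H where "H = P (y#r')"
  define L where "L = drop_level H (int x)"
  have IH: "heap H" "card H = length (y#r')" "{p \<in> H. snd p = 0} = {(0,0)}"
     "\<forall>p\<in>H. 0 \<le> fst p" "lm H = int y"
    using Cons.IH[OF v] unfolding H_def by auto
  have fH: "finite H" unfolding H_def by simp
  have PE: "P (x#y#r') = insert (int x, L) H" unfolding H_def L_def by simp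
  have notin: "(int x, L) \<notin> H"
  proof
    assume "(int x, L) \<in> H"
    then have "L < L" using DL_gt[OF fH, of "int x" L "int x"] unfolding L_def by simp
    then show False by simp
  qed
  obtain z where z: "z \<in> set (y#r')" "concurrent (int x) (int z)"
  proof (cases "x = 0")
    case True
    then have "0 \<in> set (y#r')" using valid_range[OF v, of 0] by simp
    then show ?thesis by (rule that) (simp add: True concurrent_def)
  next
    case False
    then have "x - 1 \<in> set (y#r')" using valid_range[OF v, of "x-1"] xy by simp
    moreover have "concurrent (int x) (int (x-1))" using False by (auto simp: concurrent_def)
    ultimately show ?thesis using that by blast
  qed
  have "int z \<in> fst ` H" using z(1) P_fst[of "y#r'"] unfolding H_def by auto
  then obtain hz where hz: "(int z, hz) \<in> H" by force
  have Lpos: "0 < L" using DL_gt[OF fH hz z(2)] unfolding L_def by simp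
  have c1: "heap (P (x#y#r'))" unfolding PE L_def by (rule heap_drop[OF IH(1)])
  have c2: "card (P (x#y#r')) = length (x#y#r')"
    unfolding PE card_insert_disjoint[OF fH notin] IH(2) by simp
  have "{p \<in> P (x#y#r'). snd p = 0} = {p \<in> H. snd p = 0}"
    unfolding PE by (rule filt_ins) (use Lpos in simp)
  then have c3: "{p \<in> P (x#y#r'). snd p = 0} = {(0,0)}" by (rule trans[OF _ IH(3)])
  have c4: "\<forall>p\<in>P (x#y#r'). 0 \<le> fst p" unfolding PE using IH(4) by auto
  define Hn where "Hn = insert (int x, L) H"
  have fHn: "finite Hn" unfolding Hn_def using fH by simp
  have mx: "maxl Hn (int x, L)" unfolding maxl_def Hn_def
  proof (intro conjI ballI impI)
    fix q assume q: "q \<in> insert (int x, L) H" and c: "concurrent (fst (int x, L)) (fst q)"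
    obtain a b where qab: "q = (a,b)" by (cases q)
    show "snd q \<le> snd (int x, L)"
    proof (cases "q = (int x, L)")
      case True then show ?thesis by simp
    next
      case False
      then have "(a,b) \<in> H" using q qab by blast
      then have "b < L" using DL_gt[OF fH, of a b "int x"] c qab unfolding L_def by simp
      then show ?thesis using qab by simp
    qed
  qed simp
  have lmin: "\<forall>q. maxl Hn q \<longrightarrow> fst (int x, L) \<le> fst q"
  proof (intro allI impI)
    fix q assume mq: "maxl Hn q"
    obtain a b where qab: "q = (a,b)" by (cases q)
    show "fst (int x, L) \<le> fst q"
    proof (cases "q = (int x, L)")
      case True then show ?thesis by simp
    next
      case False
      then have qH: "(a,b) \<in> H" using mq qab unfolding maxl_def Hn_def by blast
      have "maxl H (a,b)" using mq qab qH unfolding maxl_def Hn_def by auto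
      then have ya: "int y \<le> a" using lm_le[OF fH] IH(5) by fastforce
      show ?thesis
      proof (rule ccontr)
        assume "\<not> fst (int x, L) \<le> fst q"
        then have ax: "a < int x" using qab by simp
        then have "a = int y" "int x = int y + 1" using ya xy by auto
        then have "concurrent (int x) a" by (simp add: concurrent_def)
        then have "b < L" using DL_gt[OF fH qH] unfolding L_def by simp
        moreover have "L \<le> b"
        proof -
          have "(int x, L) \<in> Hn" unfolding Hn_def by simp
          moreover have "concurrent a (int x)" using \<open>concurrent (int x) a\<close> conc_sym by blast
          ultimately show ?thesis using mq qab unfolding maxl_def by force
        qed
        ultimately show False by simp
      qed
    qed
  qed
  have c5: "lm (P (x#y#r')) = int x" unfolding PE using lm_eqI[OF fHn mx lmin] unfolding Hn_def by simp
  show ?case using c1 c2 c3 c4 c5 by blast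
qed

lemma P_rem: "P r = P (x#r) - {(int x, Max {h. (int x, h) \<in> P (x#r)})}"
proof -
  define H where "H = P r"
  define L where "L = drop_level H (int x)"
  have fH: "finite H" unfolding H_def by simp
  have lt: "\<And>h. (int x, h) \<in> H \<Longrightarrow> h < L" using DL_gt[OF fH] unfolding L_def by simp
  have notin: "(int x, L) \<notin> H" using lt by blast
  have PE: "P (x#r) = insert (int x, L) H" unfolding H_def L_def by simp
  have fin: "finite {h. (int x, h) \<in> insert (int x, L) H}"
  proof -
    have "{h. (int x, h) \<in> insert (int x, L) H} \<subseteq> snd ` insert (int x, L) H" by force
    then show ?thesis using fH finite_subset by blast
  qed
  have "Max {h. (int x, h) \<in> insert (int x, L) H} = L"
    using fin lt by (intro Max_eqI) (auto simp: less_imp_le)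
  then show ?thesis unfolding PE using notin H_def by simp
qed

lemma P_inj: "valid b \<Longrightarrow> valid b' \<Longrightarrow> P b = P b' \<Longrightarrow> b = b'"
proof (induction b arbitrary: b')
  case Nil then show ?case by simp
next
  case (Cons x r)
  obtain x' r' where b': "b' = x'#r'" using Cons.prems by (cases b') auto
  have "int x = int x'" using P_props[OF Cons.prems(1)] P_props[of x' r'] Cons.prems b' by metis
  then have xx: "x = x'" by simp
  have PP: "P (x#r) = P (x'#r')" using Cons.prems(3) b' by simp
  have "P r = P (x#r) - {(int x, Max {h. (int x,h) \<in> P (x#r)})}" by (rule P_rem)
  also have "\<dots> = P (x'#r') - {(int x', Max {h. (int x',h) \<in> P (x'#r')})}" by (subst PP)+ (simp only: xx)
  also have "\<dots> = P r'" by (rule P_rem[symmetric])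
  finally have Pr: "P r = P r'" .
  show ?case
  proof (cases "r = []")
    case True
    then have "r' = []" using Pr by (cases r') auto
    then show ?thesis using True xx b' by simp
  next
    case False
    then have "P r \<noteq> {}" by (cases r) auto
    then have F': "r' \<noteq> []" using Pr by auto
    have "valid r" "valid r'" using valid_tl Cons.prems b' False F' by blast+
    then have "r = r'" using Cons.IH Pr by blast
    then show ?thesis using xx b' by simp
  qed
qed

lemma P_surj: "m \<ge> 1 \<Longrightarrow> good H \<Longrightarrow> {p \<in> H. snd p = 0} = {(0,0)} \<Longrightarrow> (\<forall>p\<in>H. 0 \<le> fst p)
   \<Longrightarrow> card H = m \<Longrightarrow> \<exists>b. valid b \<and> length b = m \<and> P b = H"
proof (induction m arbitrary: H)
  case 0 then show ?case by simp
next
  case (Suc m)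
  have gH: "good H" and L0: "{p \<in> H. snd p = 0} = {(0,0)}" and nn: "\<forall>p\<in>H. 0 \<le> fst p"
    and cH: "card H = Suc m" using Suc.prems by auto
  have fH: "finite H" using gH by (simp add: good_def)
  have supp: "\<And>s h. (s,h) \<in> H \<Longrightarrow> 0 < h \<Longrightarrow> \<exists>t. (t,h-1) \<in> H \<and> concurrent s t"
    using gH by (simp add: good_def)
  have anti: "\<And>s t h. (s,h) \<in> H \<Longrightarrow> (t,h) \<in> H \<Longrightarrow> s \<noteq> t \<Longrightarrow> \<not> concurrent s t"
    using gH by (simp add: good_def)
  have "(0,0) \<in> {p \<in> H. snd p = 0}" unfolding L0 by simp
  then have o0: "(0,0) \<in> H" by simp
  have lev0: "s = 0" if "(s,0) \<in> H" for s
  proof -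
    have "(s,0) \<in> {p \<in> H. snd p = 0}" using that by simp
    then show ?thesis unfolding L0 by simp
  qed
  show ?case
  proof (cases "m = 0")
    case True
    then have "card H = 1" using cH by simp
    then obtain a where "H = {a}" using card_1_singletonE by blast
    then have "H = {(0,0)}" using o0 by simp
    then show ?thesis using True P_single by (intro exI[of _ "[0]"]) simp
  next
    case False
    have Hne: "H \<noteq> {}" using o0 by blast
    obtain p0 where p0: "maxl H p0" "fst p0 = lm H" using lm_mem[OF fH Hne] by blast
    obtain j l where jl: "p0 = (j,l)" by (cases p0)
    have mjl: "maxl H (j,l)" using p0 jl by simp
    have jlH: "(j,l) \<in> H" using mjl by (simp add: maxl_def)
    have lpos: "0 < l"
    proof (rule ccontr)
      assume "\<not> 0 < l"
      then have "l = 0" by simp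
      then have "j = 0" using lev0 jlH by simp
      have "card H \<ge> 2" using cH False by simp
      moreover have "card (H - {(0,0)}) = card H - 1" using o0 fH by simp
      ultimately have "0 < card (H - {(0,0)})" by simp
      then have "H - {(0,0)} \<noteq> {}" by (metis card.empty less_irrefl)
      then obtain q where q: "q \<in> H" "q \<noteq> (0,0)" by blast
      obtain a b where qab: "q = (a,b)" by (cases q)
      have "b \<noteq> 0"
      proof
        assume b0: "b = 0"
        then have "(a,0) \<in> H" using q(1) qab by simp
        then have "a = 0" by (rule lev0)
        then show False using q(2) qab b0 by simp
      qed
      then obtain t where t1: "(t, 1) \<in> H" using descent[OF gH, of a b 1] q qab by auto
      then obtain t' where "(t', 0) \<in> H" "concurrent t t'" using supp[OF t1] by auto
      then have "concurrent 0 t" using lev0 conc_sym by blast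
      then have "1 \<le> l" using mjl t1 \<open>j = 0\<close> unfolding maxl_def by force
      then show False using \<open>l = 0\<close> by simp
    qed
    define H0 where "H0 = H - {(j,l)}"
    have fH0: "finite H0" unfolding H0_def using fH by simp
    have g0: "good H0" unfolding good_def
    proof (intro conjI allI impI)
      show "finite H0" by (rule fH0)
    next
      fix s h assume sh: "(s,h) \<in> H0" and h: "0 < h"
      obtain t where t: "(t,h-1) \<in> H" "concurrent s t" using supp[of s h] sh h unfolding H0_def by blast
      have "(t,h-1) \<noteq> (j,l)"
      proof
        assume E: "(t,h-1) = (j,l)"
        then have "concurrent j s" using t conc_sym by auto
        then have hl: "h \<le> l" using mjl sh unfolding maxl_def H0_def by force
        have "h - 1 = l" using E by simp
        then show False using hl h by linarith
      qed
      then show "\<exists>t. (t,h-1) \<in> H0 \<and> concurrent s t" using t unfolding H0_def by blast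
    next
      fix s t h assume "(s,h) \<in> H0" "(t,h) \<in> H0" "s \<noteq> t"
      then show "\<not> concurrent s t" using anti unfolding H0_def by blast
    qed
    have "{p \<in> H0. snd p = 0} = {p \<in> H. snd p = 0}"
      unfolding H0_def by (rule filt_diff) (use lpos in simp)
    then have L00: "{p \<in> H0. snd p = 0} = {(0,0)}" by (rule trans[OF _ L0])
    have nn0: "\<forall>p\<in>H0. 0 \<le> fst p" unfolding H0_def using nn by auto
    have c0: "card H0 = m" unfolding H0_def using cH jlH fH by simp
    obtain b where b: "valid b" "length b = m" "P b = H0"
      using Suc.IH[OF _ g0 L00 nn0 c0] False by auto
    obtain y r where byr: "b = y#r" using b False by (cases b) auto
    have lm0: "lm H0 = int y" using P_props[of y r] b byr by simp
    have j0: "0 \<le> j" using nn jlH by force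
    define x where "x = nat j"
    have jx: "j = int x" using j0 x_def by simp
    have xy: "x \<le> Suc y"
    proof (rule ccontr)
      assume A: "\<not> x \<le> Suc y"
      have H0ne: "H0 \<noteq> {}" using c0 False by auto
      obtain q where q: "maxl H0 q" "fst q = lm H0" using lm_mem[OF fH0 H0ne] by blast
      have qH: "q \<in> H" using q(1) unfolding maxl_def H0_def by blast
      have "maxl H q" unfolding maxl_def
      proof (intro conjI ballI impI)
        show "q \<in> H" by (rule qH)
      next
        fix q' assume q': "q' \<in> H" and c: "concurrent (fst q) (fst q')"
        show "snd q' \<le> snd q"
        proof (cases "q' = (j,l)")
          case True
          then have "concurrent (int y) (int x)" using c q(2) lm0 jx by simp
          then show ?thesis using A by (simp add: concurrent_def)
        next
          case False
          then have "q' \<in> H0" using q' unfolding H0_def by blast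
          then show ?thesis using q(1) c unfolding maxl_def by blast
        qed
      qed
      then have "lm H \<le> fst q" using lm_le[OF fH] by blast
      then have "int x \<le> int y" using p0 jl jx q(2) lm0 by simp
      then show False using A by simp
    qed
    have DLl: "drop_level H0 j = l"
    proof -
      obtain t0 where t0: "(t0, l-1) \<in> H" "concurrent j t0" using supp[OF jlH lpos] by blast
      have "(t0, l-1) \<in> H0" using t0 lpos unfolding H0_def by auto
      moreover have "\<forall>t h. (t,h) \<in> H0 \<longrightarrow> concurrent j t \<longrightarrow> h < l"
      proof (intro allI impI)
        fix t h assume th: "(t,h) \<in> H0" and c: "concurrent j t"
        have thH: "(t,h) \<in> H" and ne: "(t,h) \<noteq> (j,l)" using th unfolding H0_def by auto
        have "h \<le> l" using mjl thH c unfolding maxl_def by force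
        moreover have "h \<noteq> l"
        proof
          assume "h = l"
          then have "t \<noteq> j" using ne by simp
          then show False using anti[OF jlH] thH c \<open>h = l\<close> by blast
        qed
        ultimately show "h < l" by simp
      qed
      ultimately show ?thesis using DL_eq[OF fH0 lpos _ t0(2)] by blast
    qed
    have "P (x#b) = insert (j, l) H0" using b(3) DLl jx by simp
    also have "\<dots> = H" unfolding H0_def using jlH by blast
    finally have "P (x#b) = H" .
    moreover have "valid (x#b)" using b(1) byr xy by simp
    ultimately show ?thesis using b(2) by (intro exI[of _ "x#b"]) simp
  qed
qed

theorem lemma2:
  fixes m :: nat
  assumes "m \<ge> 1"
  shows "\<exists>f. bij_betw f {xs. positive_string m xs}
                         {H. right_0_pyramid H \<and> card H = m}"
proof -
  define V where "V = {b. valid b \<and> length b = m}"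
  have bW: "bij_betw W V {xs. positive_string m xs}"
    unfolding bij_betw_def
  proof
    show "inj_on W V" unfolding V_def inj_on_def using W_inj by blast
  next
    show "W ` V = {xs. positive_string m xs}"
    proof
      show "W ` V \<subseteq> {xs. positive_string m xs}"
      proof
        fix xs assume "xs \<in> W ` V"
        then obtain b where b: "valid b" "length b = m" "xs = W b" unfolding V_def by blast
        obtain x r where br: "b = x#r" using b by (cases b) auto
        have "length (W b) = 2*m" using W_inv[of x r] b br by simp
        moreover have "PN (W b) \<and> ht (W b) = 0" using W_D[of x r] b br by simp
        ultimately show "xs \<in> {xs. positive_string m xs}" using positive_iff b by simp
      qed
    next
      show "{xs. positive_string m xs} \<subseteq> W ` V"
      proof
        fix xs assume "xs \<in> {xs. positive_string m xs}"
        then have "length xs = 2*m" "PN xs" "ht xs = 0" using positive_iff by auto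
        then obtain b where "valid b" "length b = m" "W b = xs" using W_surj assms by blast
        then show "xs \<in> W ` V" unfolding V_def by blast
      qed
    qed
  qed
  have bP: "bij_betw P V {H. right_0_pyramid H \<and> card H = m}"
    unfolding bij_betw_def
  proof
    show "inj_on P V" unfolding V_def inj_on_def using P_inj by blast
  next
    show "P ` V = {H. right_0_pyramid H \<and> card H = m}"
    proof
      show "P ` V \<subseteq> {H. right_0_pyramid H \<and> card H = m}"
      proof
        fix H assume "H \<in> P ` V"
        then obtain b where b: "valid b" "length b = m" "H = P b" unfolding V_def by blast
        obtain x r where br: "b = x#r" using b by (cases b) auto
        have pr: "heap H" "card H = m" "{p \<in> H. snd p = 0} = {(0,0)}" "\<forall>p\<in>H. 0 \<le> fst p"
          using P_props[of x r] b br by auto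
        have "pyramid H" unfolding pyramid_def using pr by simp
        moreover have "(0,0) \<in> {p \<in> H. snd p = 0}" unfolding pr(3) by simp
        then have "(0,0) \<in> H" by simp
        moreover have "\<forall>(t,h)\<in>H. t \<ge> 0" using pr(4) by auto
        ultimately show "H \<in> {H. right_0_pyramid H \<and> card H = m}"
          unfolding right_0_pyramid_def using pr(2) by simp
      qed
    next
      show "{H. right_0_pyramid H \<and> card H = m} \<subseteq> P ` V"
      proof
        fix H assume "H \<in> {H. right_0_pyramid H \<and> card H = m}"
        then have R: "pyramid H" "(0,0) \<in> H" "\<forall>(t,h)\<in>H. t \<ge> 0" "card H = m"
          unfolding right_0_pyramid_def by auto
        have hp: "heap H" and c1: "card {p \<in> H. snd p = 0} = 1" using R(1) unfolding pyramid_def by auto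
        obtain a where a: "{p \<in> H. snd p = 0} = {a}" using card_1_singletonE[OF c1] by blast
        have "(0,0) \<in> {p \<in> H. snd p = 0}" using R(2) by simp
        then have L0: "{p \<in> H. snd p = 0} = {(0,0)}" using a by simp
        have nn: "\<forall>p\<in>H. 0 \<le> fst p" using R(3) by auto
        obtain b where "valid b" "length b = m" "P b = H"
          using P_surj[OF assms heap_good[OF hp] L0 nn R(4)] by blast
        then show "H \<in> P ` V" unfolding V_def by blast
      qed
    qed
  qed
  have "bij_betw (P \<circ> inv_into V W) {xs. positive_string m xs} {H. right_0_pyramid H \<and> card H = m}"
    by (rule bij_betw_trans[OF bij_betw_inv_into[OF bW] bP])
  then show ?thesis by blast
qed

end
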